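(* Let $\mathbf{B},\mathbf{C}$ be structures over a signature $\sigma$ such that $\mathbf{C}$ is a substructure of $\mathbf{B}$ and there exists a retraction $h$ from $\mathbf{B}$ to $\mathbf{C}$. Then for every subset $S\subseteq\mathrm{dom}(\mathbf{B})$ and every structure $\mathbf{D}$ over $\sigma$, $|\mathrm{homs}(\mathbf{B},S,\mathbf{D})|\ge|\mathrm{homs}(\mathbf{C},S\cap\mathrm{dom}(\mathbf{C}),\mathbf{D})|$.
   Context: A structure $\mathbf{A}$ over a signature $\sigma$ (finite set of relation symbols with arities) has a finite universe $\mathrm{dom}(\mathbf{A})$ and relations $R^{\mathbf{A}}\subseteq\mathrm{dom}(\mathbf{A})^{\mathrm{ar}(R)}$. A homomorphism $\mathbf{A}\to\mathbf{D}$ is a map $g:\mathrm{dom}(\mathbf{A})\to\mathrm{dom}(\mathbf{D})$ with $g(\bar t)\in R^{\mathbf{D}}$ for all $\bar t\in R^{\mathbf{A}}$, $R\in\sigma$. $\mathbf{C}$ is a substructure of $\mathbf{B}$ if $\mathrm{dom}(\mathbf{C})\subseteq\mathrm{dom}(\mathbf{B})$ and $R^{\mathbf{C}}\subseteq R^{\mathbf{B}}$ for all $R\in\sigma$. A retraction from $\mathbf{B}$ to a substructure $\mathbf{C}$ is a homomorphism $\mathbf{B}\to\mathbf{C}$ that is the identity on $\mathrm{dom}(\mathbf{C})$. For $S\subseteq\mathrm{dom}(\mathbf{A})$, $\mathrm{homs}(\mathbf{A},S,\mathbf{D})=\{g|_S : g \text{ a homomorphism } \mathbf{A}\to\mathbf{D}\}$.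 *)

theory Defs
  imports "HOL-Library.FuncSet"
begin

record ('r, 'a) struct =
  dom :: "'a set"
  rel :: "'r \<Rightarrow> 'a list set"

definition signature :: "'r set \<Rightarrow> bool" where
  "signature \<sigma> \<longleftrightarrow> finite \<sigma>"

definition is_structure :: "'r set \<Rightarrow> ('r \<Rightarrow> nat) \<Rightarrow> ('r, 'a) struct \<Rightarrow> bool" where
  "is_structure \<sigma> ar A \<longleftrightarrow> finite (dom A) \<and>
     (\<forall>R\<in>\<sigma>. \<forall>t\<in>rel A R. length t = ar R \<and> set t \<subseteq> dom A)"

definition is_hom :: "'r set \<Rightarrow> ('r, 'a) struct \<Rightarrow> ('r, 'b) struct \<Rightarrow> ('a \<Rightarrow> 'b) \<Rightarrow> bool" where
  "is_hom \<sigma> A D g \<longleftrightarrow> g \<in> dom A \<rightarrow>\<^sub>E dom D \<and>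
     (\<forall>R\<in>\<sigma>. \<forall>t\<in>rel A R. map g t \<in> rel D R)"

definition substructure :: "'r set \<Rightarrow> ('r, 'a) struct \<Rightarrow> ('r, 'a) struct \<Rightarrow> bool" where
  "substructure \<sigma> C B \<longleftrightarrow> dom C \<subseteq> dom B \<and> (\<forall>R\<in>\<sigma>. rel C R \<subseteq> rel B R)"

definition retraction :: "'r set \<Rightarrow> ('r, 'a) struct \<Rightarrow> ('r, 'a) struct \<Rightarrow> ('a \<Rightarrow> 'a) \<Rightarrow> bool" where
  "retraction \<sigma> B C h \<longleftrightarrow> is_hom \<sigma> B C h \<and> (\<forall>x\<in>dom C. h x = x)"

definition homs :: "'r set \<Rightarrow> ('r, 'a) struct \<Rightarrow> 'a set \<Rightarrow> ('r, 'b) struct \<Rightarrow> ('a \<Rightarrow> 'b) set" where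
  "homs \<sigma> A S D = {restrict g S | g. is_hom \<sigma> A D g}"

end

theory Submission
  imports Defs
begin

theorem lemma5p4:
  fixes \<sigma> :: "'r set" and ar :: "'r \<Rightarrow> nat"
    and B C :: "('r, 'a) struct" and D :: "('r, 'b) struct"
    and h :: "'a \<Rightarrow> 'a" and S :: "'a set"
  assumes "signature \<sigma>"
    and "is_structure \<sigma> ar B" and "is_structure \<sigma> ar C" and "is_structure \<sigma> ar D"
    and "substructure \<sigma> C B"
    and "retraction \<sigma> B C h"
    and "S \<subseteq> dom B"
  shows "card (homs \<sigma> B S D) \<ge> card (homs \<sigma> C (S \<inter> dom C) D)"
proof -
  have fB: "finite (dom B)" and fD: "finite (dom D)"
    using assms(2,4) by (auto simp: is_structure_def)
  have fS: "finite S" using fB assms(7) finite_subset by blast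
  have sub: "homs \<sigma> B S D \<subseteq> S \<rightarrow>\<^sub>E dom D"
    using assms(7) by (auto simp: homs_def is_hom_def PiE_def Pi_def)
  have fin: "finite (homs \<sigma> B S D)"
    by (rule finite_subset[OF sub]) (simp add: finite_PiE fS fD)
  have hC: "h \<in> dom B \<rightarrow> dom C" and hrel: "\<forall>R\<in>\<sigma>. \<forall>t\<in>rel B R. map h t \<in> rel C R"
    and hid: "\<forall>x\<in>dom C. h x = x"
    using assms(6) by (auto simp: retraction_def is_hom_def PiE_def)
  have surj: "homs \<sigma> C (S \<inter> dom C) D \<subseteq> (\<lambda>f. restrict f (S \<inter> dom C)) ` homs \<sigma> B S D"
  proof
    fix f assume "f \<in> homs \<sigma> C (S \<inter> dom C) D"
    then obtain g where f: "f = restrict g (S \<inter> dom C)" and g: "is_hom \<sigma> C D g"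
      by (auto simp: homs_def)
    define g' where "g' = restrict (\<lambda>x. g (h x)) (dom B)"
    have gD: "g \<in> dom C \<rightarrow> dom D" and grel: "\<forall>R\<in>\<sigma>. \<forall>t\<in>rel C R. map g t \<in> rel D R"
      using g by (auto simp: is_hom_def PiE_def)
    have "is_hom \<sigma> B D g'"
      unfolding is_hom_def
    proof
      show "g' \<in> dom B \<rightarrow>\<^sub>E dom D" using hC gD by (auto simp: g'_def)
      show "\<forall>R\<in>\<sigma>. \<forall>t\<in>rel B R. map g' t \<in> rel D R"
      proof (intro ballI)
        fix R t assume R: "R \<in> \<sigma>" and t: "t \<in> rel B R"
        have "set t \<subseteq> dom B" using assms(2) R t by (auto simp: is_structure_def)
        hence "map g' t = map g (map h t)" by (auto simp: g'_def intro!: map_cong)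
        thus "map g' t \<in> rel D R" using hrel grel R t by metis
      qed
    qed
    moreover have "restrict (restrict g' S) (S \<inter> dom C) = f"
      using f hid assms(5,7) by (auto simp: g'_def substructure_def restrict_def intro!: ext)
    ultimately show "f \<in> (\<lambda>f. restrict f (S \<inter> dom C)) ` homs \<sigma> B S D"
      unfolding homs_def by blast
  qed
  show ?thesis using surj_card_le[OF fin surj] .
qed

end
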